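(* Let $U,V\subseteq M$ be open and let $\Psi:U\to V$ be a diffeomorphism with $\Psi^*t=t$. Then: (1) for every covariant tensor $\omega$ on $V$, $j_*\Psi^*\omega=j_*\Psi^*j_*\omega$; (2) for every $(n+1)$-form $\omega$ and spatial vector field $S$ on $V$, $j_*\Psi^*(S\lrcorner\omega)=0$; (3) if additionally $\Psi$ is the identity on $\Sigma_{t_0}\cap U$ for some $t_0$, and $B$ is a spatial tensor field on $V$, then $j_*\Psi^*B=B$ on $\Sigma_{t_0}\cap U$.
   Context: $M=\Sigma\times I$, where $\Sigma\subseteq\mathbb R^n$ is open with coordinates $x^1,\dots,x^n$ and $I\subseteq\mathbb R$ is an open interval with coordinate $t$; $\Sigma_t=\Sigma\times\{t\}$. A tensor is spatial if it vanishes whenever one of its arguments is $dt$ or $\partial_t$. The projection $j_*$ onto spatial tensors is defined by $j_*dt=0$, $j_*dx^i=dx^i$, $j_*\partial_t=0$, $j_*\partial_{x^i}=\partial_{x^i}$, extended by $j_*T(\cdot,\dots,\cdot)=T(j_*\cdot,\dots,j_*\cdot)$. The pullback $\Psi^*$ acts on vectors by $\Psi^*Y=(\Psi^{-1})_*Y$ and hence on arbitrary tensors. *)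

theory Defs
  imports "HOL-Analysis.Analysis"
begin

text \<open>Points and tangent vectors of M = Sigma x I, a subset of R^n x R.
  The first component carries the spatial coordinates x^1..x^n, the second one t.\<close>
type_synonym ('n) pt = "(real ^ ('n::finite)) \<times> real"

fun iter_dderiv :: "'a::real_normed_vector list \<Rightarrow> ('a \<Rightarrow> 'b::real_normed_vector) \<Rightarrow> 'a \<Rightarrow> 'b" where
  "iter_dderiv [] f = f"
| "iter_dderiv (u # us) f = (\<lambda>x. frechet_derivative (iter_dderiv us f) (at x) u)"

definition smooth_on :: "'a::real_normed_vector set \<Rightarrow> ('a \<Rightarrow> 'b::real_normed_vector) \<Rightarrow> bool" where
  "smooth_on S f \<longleftrightarrow> (\<forall>us. iter_dderiv us f differentiable_on S)"

definition diffeomorphism :: "'a::real_normed_vector set \<Rightarrow> 'a set \<Rightarrow> ('a \<Rightarrow> 'a) \<Rightarrow> bool" where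
  "diffeomorphism U V \<Psi> \<longleftrightarrow> open U \<and> open V \<and> bij_betw \<Psi> U V \<and>
     smooth_on U \<Psi> \<and> smooth_on V (inv_into U \<Psi>)"

definition jvec :: "('n::finite) pt \<Rightarrow> 'n pt" where
  "jvec v = (fst v, 0)"

definition dt :: "('n::finite) pt \<Rightarrow> real" where "dt v = snd v"
definition ddt :: "('n::finite) pt" where "ddt = (0, 1)"

definition multilinear :: "nat \<Rightarrow> ('v::real_vector list \<Rightarrow> real) \<Rightarrow> bool" where
  "multilinear k T \<longleftrightarrow> (\<forall>xs i. length xs = k \<longrightarrow> i < k \<longrightarrow> linear (\<lambda>v. T (xs[i := v])))"

definition alternating :: "nat \<Rightarrow> ('v::real_vector list \<Rightarrow> real) \<Rightarrow> bool" where
  "alternating k T \<longleftrightarrow> multilinear k T \<and>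
     (\<forall>xs i i'. length xs = k \<longrightarrow> i < k \<longrightarrow> i' < k \<longrightarrow> i \<noteq> i' \<longrightarrow> xs ! i = xs ! i' \<longrightarrow> T xs = 0)"

definition cov_tensor_field :: "('n::finite) pt set \<Rightarrow> nat \<Rightarrow> ('n pt \<Rightarrow> 'n pt list \<Rightarrow> real) \<Rightarrow> bool" where
  "cov_tensor_field V k \<omega> \<longleftrightarrow> (\<forall>p\<in>V. multilinear k (\<omega> p)) \<and>
     (\<forall>vs. length vs = k \<longrightarrow> smooth_on V (\<lambda>p. \<omega> p vs))"

definition form_field :: "('n::finite) pt set \<Rightarrow> nat \<Rightarrow> ('n pt \<Rightarrow> 'n pt list \<Rightarrow> real) \<Rightarrow> bool" where
  "form_field V k \<omega> \<longleftrightarrow> cov_tensor_field V k \<omega> \<and> (\<forall>p\<in>V. alternating k (\<omega> p))"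

definition spatial_vector_field :: "('n::finite) pt set \<Rightarrow> ('n pt \<Rightarrow> 'n pt) \<Rightarrow> bool" where
  "spatial_vector_field V S \<longleftrightarrow> smooth_on V S \<and> (\<forall>p\<in>V. dt (S p) = 0)"

definition pullback_cov :: "(('n::finite) pt \<Rightarrow> 'n pt) \<Rightarrow> ('n pt \<Rightarrow> 'n pt list \<Rightarrow> real) \<Rightarrow> 'n pt \<Rightarrow> 'n pt list \<Rightarrow> real" where
  "pullback_cov \<Psi> \<omega> p vs = \<omega> (\<Psi> p) (map (frechet_derivative \<Psi> (at p)) vs)"

definition jstar_cov :: "(('n::finite) pt \<Rightarrow> 'n pt list \<Rightarrow> real) \<Rightarrow> 'n pt \<Rightarrow> 'n pt list \<Rightarrow> real" where
  "jstar_cov \<omega> p vs = \<omega> p (map jvec vs)"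

definition interior_product :: "(('n::finite) pt \<Rightarrow> 'n pt) \<Rightarrow> ('n pt \<Rightarrow> 'n pt list \<Rightarrow> real) \<Rightarrow> 'n pt \<Rightarrow> 'n pt list \<Rightarrow> real" where
  "interior_product S \<omega> p vs = \<omega> p (S p # vs)"

definition multilinear_mixed :: "nat \<Rightarrow> nat \<Rightarrow> ((('n::finite) pt \<Rightarrow> real) list \<Rightarrow> 'n pt list \<Rightarrow> real) \<Rightarrow> bool" where
  "multilinear_mixed r k T \<longleftrightarrow>
     (\<forall>as vs. length as = r \<longrightarrow> length vs = k \<longrightarrow> (\<forall>a\<in>set as. linear a) \<longrightarrow>
        (\<forall>i<k. linear (\<lambda>v. T as (vs[i := v]))) \<and>
        (\<forall>i<r. \<forall>b c. linear b \<longrightarrow> linear c \<longrightarrow> (\<forall>s::real.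
            T (as[i := (\<lambda>x. b x + s * c x)]) vs = T (as[i := b]) vs + s * T (as[i := c]) vs)))"

definition tensor_field :: "('n::finite) pt set \<Rightarrow> nat \<Rightarrow> nat \<Rightarrow> ('n pt \<Rightarrow> ('n pt \<Rightarrow> real) list \<Rightarrow> 'n pt list \<Rightarrow> real) \<Rightarrow> bool" where
  "tensor_field V r k B \<longleftrightarrow> (\<forall>p\<in>V. multilinear_mixed r k (B p)) \<and>
     (\<forall>as vs. length as = r \<longrightarrow> length vs = k \<longrightarrow> (\<forall>a\<in>set as. linear a) \<longrightarrow>
        smooth_on V (\<lambda>p. B p as vs))"

definition spatial :: "('n::finite) pt set \<Rightarrow> nat \<Rightarrow> nat \<Rightarrow> ('n pt \<Rightarrow> ('n pt \<Rightarrow> real) list \<Rightarrow> 'n pt list \<Rightarrow> real) \<Rightarrow> bool" where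
  "spatial V r k B \<longleftrightarrow> (\<forall>p\<in>V. \<forall>as vs. length as = r \<longrightarrow> length vs = k \<longrightarrow> (\<forall>a\<in>set as. linear a) \<longrightarrow>
        (dt \<in> set as \<or> ddt \<in> set vs) \<longrightarrow> B p as vs = 0)"

text \<open>pullback: vectors are pushed forward by D Psi, covectors are pulled back by
  D(Psi^{-1}) (i.e. Psi^* Y = (Psi^{-1})_* Y on vectors)\<close>
definition pullback :: "('n::finite) pt set \<Rightarrow> ('n pt \<Rightarrow> 'n pt) \<Rightarrow> ('n pt \<Rightarrow> ('n pt \<Rightarrow> real) list \<Rightarrow> 'n pt list \<Rightarrow> real)
     \<Rightarrow> 'n pt \<Rightarrow> ('n pt \<Rightarrow> real) list \<Rightarrow> 'n pt list \<Rightarrow> real" where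
  "pullback U \<Psi> B p as vs =
     B (\<Psi> p) (map (\<lambda>a. a \<circ> frechet_derivative (inv_into U \<Psi>) (at (\<Psi> p))) as)
              (map (frechet_derivative \<Psi> (at p)) vs)"

definition jstar :: "(('n::finite) pt \<Rightarrow> ('n pt \<Rightarrow> real) list \<Rightarrow> 'n pt list \<Rightarrow> real)
     \<Rightarrow> 'n pt \<Rightarrow> ('n pt \<Rightarrow> real) list \<Rightarrow> 'n pt list \<Rightarrow> real" where
  "jstar B p as vs = B p (map (\<lambda>a. a \<circ> jvec) as) (map jvec vs)"

end

theory Submission imports Defs begin

lemma alt_zero:
  fixes ws :: "('n::finite) pt list"
  assumes alt: "alternating k T" and len: "length ws = k" and k: "k = CARD('n) + 1"
    and sp: "\<forall>w\<in>set ws. snd w = 0"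
  shows "T ws = 0"
proof (cases "distinct ws")
  case False
  then obtain i j where ij: "i < k" "j < k" "i \<noteq> j" "ws ! i = ws ! j"
    using len by (auto simp: distinct_conv_nth)
  then show ?thesis using alt len unfolding alternating_def by blast
next
  case True
  have cardk: "card (set ws) = k" using True len by (simp add: distinct_card)
  have sub: "set ws \<subseteq> range (\<lambda>x::real^'n. (x, 0::real))"
    using sp by (auto simp: image_iff intro!: exI[where x="fst _"])
  have lin: "linear (\<lambda>x::real^'n. (x, 0::real))"
    by (rule linearI) auto
  have "dim (range (\<lambda>x::real^'n. (x, 0::real))) \<le> dim (UNIV :: (real^'n) set)"
    by (rule dim_image_le[OF lin])
  also have "\<dots> = CARD('n)" by (simp add: dim_UNIV)
  finally have dimle: "dim (range (\<lambda>x::real^'n. (x, 0::real))) \<le> CARD('n)" .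
  have "dependent (set ws)"
  proof (rule ccontr)
    assume "\<not> dependent (set ws)"
    from independent_card_le_dim[OF sub this] dimle cardk k show False by simp
  qed
  then obtain a where a: "a \<in> set ws" "a \<in> span (set ws - {a})"
    unfolding dependent_def by blast
  then obtain i where i: "i < k" "ws ! i = a" using len by (auto simp: in_set_conv_nth)
  define S' where "S' = set ws - {a}"
  from a(2) obtain c where c: "a = (\<Sum>v\<in>S'. c v *\<^sub>R v)"
    using span_finite[of "set ws - {a}"] unfolding S'_def by auto
  have linT: "linear (\<lambda>v. T (ws[i := v]))" using alt len i unfolding alternating_def multilinear_def by blast
  have "T ws = T (ws[i := a])" using i len by (metis list_update_id)
  also have "\<dots> = (\<Sum>v\<in>S'. T (ws[i := c v *\<^sub>R v]))"
    by (subst c) (rule linear_sum[OF linT])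
  also have "\<dots> = (\<Sum>v\<in>S'. c v * T (ws[i := v]))"
    using linear_scale[OF linT] by simp
  also have "\<dots> = 0"
  proof (rule sum.neutral, rule ballI)
    fix v assume v: "v \<in> S'"
    then obtain j where j: "j < k" "ws ! j = v" using len unfolding S'_def by (auto simp: in_set_conv_nth)
    have "j \<noteq> i" using i j v unfolding S'_def by auto
    then have "T (ws[i := v]) = 0"
      using alt len i j unfolding alternating_def
      by (metis length_list_update nth_list_update_eq nth_list_update_neq)
    then show "c v * T (ws[i := v]) = 0" by simp
  qed
  finally show ?thesis .
qed

lemma deriv_fix_dir:
  fixes f :: "'a::real_normed_vector \<Rightarrow> 'a"
  assumes d: "(f has_derivative D) (at p)" and U: "open U" "p \<in> U"
    and fx: "\<And>s. p + s *\<^sub>R w \<in> U \<Longrightarrow> f (p + s *\<^sub>R w) = p + s *\<^sub>R w"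
  shows "D w = w"
proof -
  let ?g = "\<lambda>s::real. p + s *\<^sub>R w"
  have gd: "(?g has_derivative (\<lambda>s. s *\<^sub>R w)) (at 0)"
    by (auto intro!: derivative_eq_intros)
  have "(f \<circ> ?g has_derivative D \<circ> (\<lambda>s. s *\<^sub>R w)) (at 0)"
    using diff_chain_at[OF gd] d by simp
  moreover have oS: "open (?g -` U)"
    by (rule continuous_open_vimage[OF U(1)]) (auto intro!: continuous_intros)
  moreover have "0 \<in> ?g -` U" using U by simp
  ultimately have "(?g has_derivative D \<circ> (\<lambda>s. s *\<^sub>R w)) (at 0)"
    by (rule has_derivative_transform_within_open) (auto simp: fx)
  from has_derivative_unique[OF this gd] have "(D \<circ> (\<lambda>s. s *\<^sub>R w)) 1 = 1 *\<^sub>R w"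
    by metis
  then show ?thesis by simp
qed


lemma map_replace:
  assumes step: "\<And>xs i. C xs \<Longrightarrow> i < length xs \<Longrightarrow> C (xs[i := f (xs!i)]) \<and> F (xs[i := f (xs!i)]) = F xs"
    and C: "C xs"
  shows "F (map f xs) = F xs"
proof -
  have "m \<le> length xs \<Longrightarrow> C (take m (map f xs) @ drop m xs) \<and> F (take m (map f xs) @ drop m xs) = F xs" for m
  proof (induction m)
    case 0 then show ?case using C by simp
  next
    case (Suc m)
    let ?ys = "take m (map f xs) @ drop m xs"
    have m: "m < length xs" using Suc by simp
    have ly: "length ?ys = length xs" using m by simp
    have yi: "?ys ! m = xs ! m" using m by (simp add: nth_append)
    have eq: "take (Suc m) (map f xs) @ drop (Suc m) xs = ?ys[m := f (?ys ! m)]"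
      using m by (simp add: yi nth_append list_update_append take_Suc_conv_app_nth Cons_nth_drop_Suc[symmetric])
    show ?case using Suc.IH[OF Suc_leD[OF Suc.prems]] step[of ?ys m] m ly unfolding eq by auto
  qed
  from this[of "length xs"] show ?thesis by simp
qed


lemma smooth_diff_at:
  assumes "smooth_on U f" "open U" "p \<in> U"
  shows "(f has_derivative frechet_derivative f (at p)) (at p)"
proof -
  have "iter_dderiv [] f differentiable_on U" using assms(1) unfolding smooth_on_def by blast
  then have "f differentiable at p" using assms(2,3) differentiable_on_eq_differentiable_at by auto
  then show ?thesis using frechet_derivative_works by blast
qed

lemma snd_deriv:
  fixes \<Psi> :: "('n::finite) pt \<Rightarrow> 'n pt"
  assumes d: "(\<Psi> has_derivative D) (at p)" and U: "open U" "p \<in> U"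
    and time: "\<forall>p\<in>U. snd (\<Psi> p) = snd p"
  shows "snd (D w) = snd w"
proof -
  have "((\<lambda>q. snd (\<Psi> q)) has_derivative (\<lambda>v. snd (D v))) (at p)"
    using d by (auto intro!: derivative_eq_intros)
  then have "(snd has_derivative (\<lambda>v. snd (D v))) (at p)"
    by (rule has_derivative_transform_within_open[OF _ U]) (use time in auto)
  moreover have "(snd has_derivative snd) (at p)" by (rule has_derivative_snd[OF has_derivative_ident])
  ultimately have "(\<lambda>v. snd (D v)) = snd" by (rule has_derivative_unique)
  then show ?thesis by metis
qed

lemma jvec_id: "snd w = 0 \<Longrightarrow> jvec w = w" by (simp add: jvec_def prod_eq_iff)
lemma snd_jvec[simp]: "snd (jvec w) = 0" by (simp add: jvec_def)


lemma decomp: "(x::('n::finite) pt) = jvec x + snd x *\<^sub>R ddt"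
  by (simp add: jvec_def ddt_def prod_eq_iff)

lemma linear_jvec: "linear (jvec :: ('n::finite) pt \<Rightarrow> 'n pt)"
  by (rule linearI) (auto simp: jvec_def)

lemma linear_dt: "linear (dt :: ('n::finite) pt \<Rightarrow> real)"
  by (rule linearI) (auto simp: dt_def)

lemma vec_part:
  fixes T :: "(('n::finite) pt \<Rightarrow> real) list \<Rightarrow> 'n pt list \<Rightarrow> real"
  assumes ml: "multilinear_mixed r k T" and las: "length as = r" "\<forall>a\<in>set as. linear a"
    and sp: "\<forall>vs. length vs = k \<longrightarrow> ddt \<in> set vs \<longrightarrow> T as vs = 0"
    and lvs: "length vs = k"
  shows "T as (map jvec vs) = T as vs"
proof (rule map_replace[where C = "\<lambda>vs. length vs = k" and F = "T as"])
  fix xs :: "'n pt list" and i assume xs: "length xs = k" "i < length xs"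
  have lin: "linear (\<lambda>v. T as (xs[i := v]))" using ml las xs unfolding multilinear_mixed_def by auto
  have "T as (xs[i := jvec (xs ! i)]) = T as (xs[i := xs ! i + (- snd (xs ! i)) *\<^sub>R ddt])"
    by (metis (no_types, lifting) add_diff_cancel decomp diff_conv_add_uminus scaleR_minus_left)
  also have "\<dots> = T as (xs[i := xs ! i]) + T as (xs[i := (- snd (xs ! i)) *\<^sub>R ddt])"
    by (rule linear_add[OF lin])
  also have "T as (xs[i := (- snd (xs ! i)) *\<^sub>R ddt]) = (- snd (xs ! i)) * T as (xs[i := ddt])"
    using linear_scale[OF lin, of "- snd (xs ! i)" ddt] by simp
  also have "T as (xs[i := ddt]) = 0" using sp xs by (simp add: set_update_memI)
  finally show "length (xs[i := jvec (xs ! i)]) = k \<and> T as (xs[i := jvec (xs ! i)]) = T as xs"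
    using xs by simp
qed (rule lvs)

lemma cov_part:
  fixes T :: "(('n::finite) pt \<Rightarrow> real) list \<Rightarrow> 'n pt list \<Rightarrow> real"
  assumes ml: "multilinear_mixed r k T" and las: "length as = r" "\<forall>a\<in>set as. linear a"
    and sp: "\<forall>as. length as = r \<longrightarrow> (\<forall>a\<in>set as. linear a) \<longrightarrow> dt \<in> set as \<longrightarrow> T as vs = 0"
    and lvs: "length vs = k"
    and g: "\<And>a. linear a \<Longrightarrow> linear (g a) \<and> (\<exists>s. g a = (\<lambda>x. a x + s * dt x))"
  shows "T (map g as) vs = T as vs"
proof (rule map_replace[where C = "\<lambda>as. length as = r \<and> (\<forall>a\<in>set as. linear a)" and F = "\<lambda>as. T as vs"])
  fix xs :: "('n pt \<Rightarrow> real) list" and i assume xs: "length xs = r \<and> (\<forall>a\<in>set xs. linear a)" "i < length xs"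
  have la: "linear (xs ! i)" using xs by auto
  obtain s where s: "g (xs ! i) = (\<lambda>x. (xs ! i) x + s * dt x)" using g[OF la] by blast
  have lg: "linear (g (xs ! i))" using g[OF la] by blast
  have "T (xs[i := g (xs ! i)]) vs = T (xs[i := xs ! i]) vs + s * T (xs[i := dt]) vs"
  proof -
    have H: "\<forall>i<r. \<forall>b c. linear b \<longrightarrow> linear c \<longrightarrow> (\<forall>s::real.
            T (xs[i := (\<lambda>x. b x + s * c x)]) vs = T (xs[i := b]) vs + s * T (xs[i := c]) vs)"
      using ml xs lvs unfolding multilinear_mixed_def by simp
    have ir: "i < r" using xs by simp
    show ?thesis unfolding s by (rule H[rule_format, OF ir la linear_dt])
  qed
  also have "T (xs[i := dt]) vs = 0"
  proof -
    have l1: "length (xs[i := dt]) = r" using xs by simp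
    have l2: "\<forall>a\<in>set (xs[i := dt]). linear a"
      using xs linear_dt set_update_subset_insert[of xs i dt] by blast
    have l3: "dt \<in> set (xs[i := dt])" using xs(2) by (rule set_update_memI)
    show ?thesis using sp l1 l2 l3 by blast
  qed
  finally have "T (xs[i := g (xs ! i)]) vs = T xs vs" by simp
  moreover have "\<forall>a\<in>set (xs[i := g (xs ! i)]). linear a"
    using xs lg set_update_subset_insert[of xs i "g (xs ! i)"] by blast
  ultimately show "(length (xs[i := g (xs ! i)]) = r \<and> (\<forall>a\<in>set (xs[i := g (xs ! i)]). linear a)) \<and>
      T (xs[i := g (xs ! i)]) vs = T xs vs" using xs by simp
qed (use las in auto)


theorem lemma4p1:
  fixes \<Sigma> :: "(real ^ 'n) set" and I :: "real set"
    and U V :: "'n pt set" and \<Psi> :: "'n pt \<Rightarrow> 'n pt"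
  assumes \<Sigma>: "open \<Sigma>"
    and I: "open I" "is_interval I"
    and UM: "U \<subseteq> \<Sigma> \<times> I" and VM: "V \<subseteq> \<Sigma> \<times> I"
    and diffeo: "diffeomorphism U V \<Psi>"
    and time: "\<forall>p\<in>U. snd (\<Psi> p) = snd p"
  shows
    "(\<forall>k \<omega>. cov_tensor_field V k \<omega> \<longrightarrow>
        (\<forall>p\<in>U. \<forall>vs. length vs = k \<longrightarrow>
           jstar_cov (pullback_cov \<Psi> \<omega>) p vs = jstar_cov (pullback_cov \<Psi> (jstar_cov \<omega>)) p vs))
   \<and> (\<forall>\<omega> S. form_field V (CARD('n) + 1) \<omega> \<longrightarrow> spatial_vector_field V S \<longrightarrow>
        (\<forall>p\<in>U. \<forall>vs. length vs = CARD('n) \<longrightarrow>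
           jstar_cov (pullback_cov \<Psi> (interior_product S \<omega>)) p vs = 0))
   \<and> (\<forall>t0 r k B. (\<forall>p\<in>U. snd p = t0 \<longrightarrow> \<Psi> p = p) \<longrightarrow>
        tensor_field V r k B \<longrightarrow> spatial V r k B \<longrightarrow>
        (\<forall>p\<in>U \<inter> (\<Sigma> \<times> {t0}). \<forall>as vs. length as = r \<longrightarrow> length vs = k \<longrightarrow> (\<forall>a\<in>set as. linear a) \<longrightarrow>
           jstar (pullback U \<Psi> B) p as vs = B p as vs))"
proof -
  have oU: "open U" and oV: "open V" and bij: "bij_betw \<Psi> U V"
    and smU: "smooth_on U \<Psi>" and smV: "smooth_on V (inv_into U \<Psi>)"
    using diffeo unfolding diffeomorphism_def by auto
  define D where "D p = frechet_derivative \<Psi> (at p)" for p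
  have hD: "(\<Psi> has_derivative D p) (at p)" if "p \<in> U" for p
    unfolding D_def by (rule smooth_diff_at[OF smU oU that])
  have sD: "snd (D p w) = snd w" if "p \<in> U" for p w
    by (rule snd_deriv[OF hD[OF that] oU that time])
  have Dj: "jvec (D p (jvec v)) = D p (jvec v)" if "p \<in> U" for p v
    by (rule jvec_id) (simp add: sD[OF that])
  have PV: "\<Psi> p \<in> V" if "p \<in> U" for p using bij that by (auto simp: bij_betw_def)
  have part1: "\<forall>k \<omega>. cov_tensor_field V k \<omega> \<longrightarrow>
        (\<forall>p\<in>U. \<forall>vs. length vs = k \<longrightarrow>
           jstar_cov (pullback_cov \<Psi> \<omega>) p vs = jstar_cov (pullback_cov \<Psi> (jstar_cov \<omega>)) p vs)"
  proof (intro allI impI ballI)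
    fix k \<omega> p vs assume p: "p \<in> U"
    show "jstar_cov (pullback_cov \<Psi> \<omega>) p vs = jstar_cov (pullback_cov \<Psi> (jstar_cov \<omega>)) p vs"
      by (simp add: jstar_cov_def pullback_cov_def D_def[symmetric] o_def Dj[OF p])
  qed
  have part2: "\<forall>\<omega> S. form_field V (CARD('n) + 1) \<omega> \<longrightarrow> spatial_vector_field V S \<longrightarrow>
        (\<forall>p\<in>U. \<forall>vs. length vs = CARD('n) \<longrightarrow>
           jstar_cov (pullback_cov \<Psi> (interior_product S \<omega>)) p vs = 0)"
  proof (intro allI impI ballI)
    fix \<omega> S p and vs :: "'n pt list"
    assume f: "form_field V (CARD('n) + 1) \<omega>" and sv: "spatial_vector_field V S"
      and p: "p \<in> U" and l: "length vs = CARD('n)"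
    have alt: "alternating (CARD('n) + 1) (\<omega> (\<Psi> p))" using f PV[OF p] unfolding form_field_def by blast
    have s0: "snd (S (\<Psi> p)) = 0" using sv PV[OF p] unfolding spatial_vector_field_def dt_def by blast
    have "\<omega> (\<Psi> p) (S (\<Psi> p) # map (\<lambda>v. D p (jvec v)) vs) = 0"
      by (rule alt_zero[OF alt]) (use l s0 sD[OF p] in auto)
    then show "jstar_cov (pullback_cov \<Psi> (interior_product S \<omega>)) p vs = 0"
      by (simp add: jstar_cov_def pullback_cov_def interior_product_def D_def[symmetric] o_def)
  qed
  have part3: "\<forall>t0 r k B. (\<forall>p\<in>U. snd p = t0 \<longrightarrow> \<Psi> p = p) \<longrightarrow>
        tensor_field V r k B \<longrightarrow> spatial V r k B \<longrightarrow>
        (\<forall>p\<in>U \<inter> (\<Sigma> \<times> {t0}). \<forall>as vs. length as = r \<longrightarrow> length vs = k \<longrightarrow> (\<forall>a\<in>set as. linear a) \<longrightarrow>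
           jstar (pullback U \<Psi> B) p as vs = B p as vs)"
  proof (intro allI impI ballI)
    fix t0 r k B p and as :: "('n pt \<Rightarrow> real) list" and vs :: "'n pt list"
    assume fx: "\<forall>p\<in>U. snd p = t0 \<longrightarrow> \<Psi> p = p" and tf: "tensor_field V r k B"
      and spB: "spatial V r k B" and pS: "p \<in> U \<inter> (\<Sigma> \<times> {t0})"
      and la: "length as = r" and lv: "length vs = k" and lin: "\<forall>a\<in>set as. linear a"
    have pU: "p \<in> U" and pt: "snd p = t0" using pS by auto
    have Pp: "\<Psi> p = p" using fx pU pt by blast
    have pV: "p \<in> V" using PV[OF pU] Pp by simp
    define Di where "Di = frechet_derivative (inv_into U \<Psi>) (at p)"
    have hDi: "(inv_into U \<Psi> has_derivative Di) (at p)"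
      unfolding Di_def by (rule smooth_diff_at[OF smV oV pV])
    have injP: "inj_on \<Psi> U" using bij by (auto simp: bij_betw_def)
    have fixq: "\<Psi> q = q" if "q \<in> U" "snd q = t0" for q using fx that by blast
    have Dfix: "D p (jvec v) = jvec v" for v
      by (rule deriv_fix_dir[OF hD[OF pU] oU pU]) (auto intro!: fixq simp: pt)
    have Difix: "Di (jvec v) = jvec v" for v
    proof (rule deriv_fix_dir[OF hDi oU pU])
      fix s :: real assume q: "p + s *\<^sub>R jvec v \<in> U"
      have "\<Psi> (p + s *\<^sub>R jvec v) = p + s *\<^sub>R jvec v" by (rule fixq[OF q]) (simp add: pt)
      then show "inv_into U \<Psi> (p + s *\<^sub>R jvec v) = p + s *\<^sub>R jvec v"
        using inv_into_f_f[OF injP q] by simp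
    qed
    have linDi: "linear Di" using hDi has_derivative_linear by blast
    have mlp: "multilinear_mixed r k (B p)" using tf pV unfolding tensor_field_def by blast
    have spp: "\<And>as vs. length as = r \<Longrightarrow> length vs = k \<Longrightarrow> (\<forall>a\<in>set as. linear a) \<Longrightarrow>
        (dt \<in> set as \<or> ddt \<in> set vs) \<Longrightarrow> B p as vs = 0"
      using spB pV unfolding spatial_def by blast
    define g where "g a = (a \<circ> jvec) \<circ> Di" for a :: "'n pt \<Rightarrow> real"
    have gprop: "linear (g a) \<and> (\<exists>s. g a = (\<lambda>x. a x + s * dt x))" if la: "linear a" for a
    proof
      show "linear (g a)" unfolding g_def
        by (intro linear_compose[OF linDi] linear_compose[OF linear_jvec la])
      have "g a x = a x + (a (jvec (Di ddt)) - a ddt) * dt x" for x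
      proof -
        have "Di x = Di (jvec x + snd x *\<^sub>R ddt)" using decomp[of x] by simp
        also have "\<dots> = Di (jvec x) + snd x *\<^sub>R Di ddt"
          by (simp add: linear_add[OF linDi] linear_scale[OF linDi])
        finally have "Di x = jvec x + snd x *\<^sub>R Di ddt" by (simp add: Difix)
        then have "jvec (Di x) = jvec (jvec x) + snd x *\<^sub>R jvec (Di ddt)"
          by (simp add: linear_add[OF linear_jvec] linear_scale[OF linear_jvec])
        then have "jvec (Di x) = jvec x + snd x *\<^sub>R jvec (Di ddt)"
          by (simp add: jvec_id)
        then have "a (jvec (Di x)) = a (jvec x) + snd x * a (jvec (Di ddt))"
          using linear_add[OF la] linear_scale[OF la] by simp
        moreover have "a x = a (jvec x + snd x *\<^sub>R ddt)" using decomp[of x] by simp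
        then have "a x = a (jvec x) + snd x * a ddt"
          using linear_add[OF la] linear_scale[OF la] by simp
        ultimately show ?thesis by (simp add: g_def dt_def algebra_simps)
      qed
      then show "\<exists>s. g a = (\<lambda>x. a x + s * dt x)" by blast
    qed
    have lin': "\<forall>a\<in>set (map g as). linear a" using lin gprop by auto
    have "jstar (pullback U \<Psi> B) p as vs = B p (map g as) (map jvec vs)"
      by (simp add: jstar_def pullback_def Pp D_def[symmetric] Di_def[symmetric] Dfix g_def[abs_def] o_def)
    also have "\<dots> = B p (map g as) vs"
    proof (rule vec_part[OF mlp _ lin' _ lv])
      show "length (map g as) = r" using la by simp
      show "\<forall>ws. length ws = k \<longrightarrow> ddt \<in> set ws \<longrightarrow> B p (map g as) ws = 0"
      proof (intro allI impI)
        fix ws :: "'n pt list" assume w: "length ws = k" "ddt \<in> set ws"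
        have lm: "length (map g as) = r" using la by simp
        show "B p (map g as) ws = 0" by (rule spp[OF lm w(1) lin']) (use w(2) in blast)
      qed
    qed
    also have "\<dots> = B p as vs"
    proof (rule cov_part[where g = g, OF mlp la lin _ lv gprop])
      show "\<forall>as'. length as' = r \<longrightarrow> (\<forall>a\<in>set as'. linear a) \<longrightarrow> dt \<in> set as' \<longrightarrow> B p as' vs = 0"
      proof (intro allI impI)
        fix as' :: "('n pt \<Rightarrow> real) list" assume a: "length as' = r" "\<forall>a\<in>set as'. linear a" "dt \<in> set as'"
        show "B p as' vs = 0" by (rule spp[OF a(1) lv a(2)]) (use a(3) in blast)
      qed
    qed
    finally show "jstar (pullback U \<Psi> B) p as vs = B p as vs" .
  qed
  show ?thesis by (rule conjI[OF part1 conjI[OF part2 part3]])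
qed

end
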